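(* Let $\mathrel{W}$ be a tournament and $R$ a ranking on $\mathcal{X}$. Then $R$ is $\mathrel{W}$-feasible if and only if for every pair of $R$-adjacent alternatives $x,y$ with $xRy$, we have $x\mathrel{W}y$.
   Context: Let $\mathcal{X}$ be a finite set of alternatives. A proto-ranking is an irreflexive and transitive binary relation on $\mathcal{X}$; a ranking is a total proto-ranking; a tournament is a total and asymmetric binary relation on $\mathcal{X}$. Interaction: given a tournament $\mathrel{W}$, start from $R_0=\varnothing$; in each period with $R_{t-1}$ not total a chair offers a pair $\{x,y\}$ of distinct alternatives unranked by $R_{t-1}$, the winner is $x$ if $x\mathrel{W}y$ and $y$ otherwise, and $R_t$ is the transitive closure of $R_{t-1}\cup\{(\text{winner},\text{loser})\}$; stop when $R_t$ is total. A strategy assigns to each non-terminal history (sequence of (winner, loser) pairs) a pair unranked at it; its outcome under $\mathrel{W}$ is the final ranking. A ranking is $\mathrel{W}$-feasible if it is the outcome under $\mathrel{W}$ of some strategy. For a ranking $R$, alternatives $x,y$ with $xRy$ are $R$-adjacent if there is no $z$ with $xRzRy$. *)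

theory Defs
  imports Main
begin

definition proto_ranking :: "'a set \<Rightarrow> ('a \<times> 'a) set \<Rightarrow> bool" where
  "proto_ranking X R \<longleftrightarrow> R \<subseteq> X \<times> X \<and> irrefl R \<and> trans R"

definition ranking :: "'a set \<Rightarrow> ('a \<times> 'a) set \<Rightarrow> bool" where
  "ranking X R \<longleftrightarrow> proto_ranking X R \<and> total_on X R"

definition tournament :: "'a set \<Rightarrow> ('a \<times> 'a) set \<Rightarrow> bool" where
  "tournament X W \<longleftrightarrow> W \<subseteq> X \<times> X \<and> total_on X W \<and> asym W"

text \<open>Relation generated by a history (list of (winner, loser) pairs):
  R_0 = {}, R_t = transitive closure of R_(t-1) with the new pair.\<close>
definition hist_rel :: "('a \<times> 'a) list \<Rightarrow> ('a \<times> 'a) set" where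
  "hist_rel h = foldl (\<lambda>R p. trancl (R \<union> {p})) {} h"

definition unranked :: "('a \<times> 'a) set \<Rightarrow> 'a \<Rightarrow> 'a \<Rightarrow> bool" where
  "unranked R x y \<longleftrightarrow> (x, y) \<notin> R \<and> (y, x) \<notin> R"

text \<open>A strategy maps every non-terminal history to an (ordered representative of an)
  unordered pair of distinct alternatives unranked at that history.\<close>
definition strategy :: "'a set \<Rightarrow> (('a \<times> 'a) list \<Rightarrow> 'a \<times> 'a) \<Rightarrow> bool" where
  "strategy X \<sigma> \<longleftrightarrow> (\<forall>h. set h \<subseteq> X \<times> X \<and> \<not> total_on X (hist_rel h) \<longrightarrow>
      (let (x, y) = \<sigma> h in x \<in> X \<and> y \<in> X \<and> x \<noteq> y \<and> unranked (hist_rel h) x y))"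

definition winner_pair :: "('a \<times> 'a) set \<Rightarrow> 'a \<times> 'a \<Rightarrow> 'a \<times> 'a" where
  "winner_pair W p = (if p \<in> W then p else (snd p, fst p))"

inductive reached :: "'a set \<Rightarrow> ('a \<times> 'a) set \<Rightarrow> (('a \<times> 'a) list \<Rightarrow> 'a \<times> 'a)
    \<Rightarrow> ('a \<times> 'a) list \<Rightarrow> bool"
  for X W \<sigma> where
  start: "reached X W \<sigma> []"
| step: "reached X W \<sigma> h \<Longrightarrow> \<not> total_on X (hist_rel h) \<Longrightarrow>
           reached X W \<sigma> (h @ [winner_pair W (\<sigma> h)])"

definition outcome_of :: "'a set \<Rightarrow> ('a \<times> 'a) set \<Rightarrow> (('a \<times> 'a) list \<Rightarrow> 'a \<times> 'a)
    \<Rightarrow> ('a \<times> 'a) set \<Rightarrow> bool" where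
  "outcome_of X W \<sigma> R \<longleftrightarrow> (\<exists>h. reached X W \<sigma> h \<and> total_on X (hist_rel h) \<and> R = hist_rel h)"

definition feasible :: "'a set \<Rightarrow> ('a \<times> 'a) set \<Rightarrow> ('a \<times> 'a) set \<Rightarrow> bool" where
  "feasible X W R \<longleftrightarrow> ranking X R \<and> (\<exists>\<sigma>. strategy X \<sigma> \<and> outcome_of X W \<sigma> R)"

definition adjacent :: "('a \<times> 'a) set \<Rightarrow> 'a \<Rightarrow> 'a \<Rightarrow> bool" where
  "adjacent R x y \<longleftrightarrow> (x, y) \<in> R \<and> \<not> (\<exists>z. (x, z) \<in> R \<and> (z, y) \<in> R)"

end

theory Submission
  imports Defs
begin

lemma trancl_mono2: "r \<subseteq> s \<Longrightarrow> trancl r \<subseteq> trancl s"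
  by (auto intro: trancl_mono)

lemma trancl_trancl_Un: "trancl (trancl A \<union> B) = trancl (A \<union> B)"
proof
  show "trancl (trancl A \<union> B) \<subseteq> trancl (A \<union> B)"
  proof -
    have "trancl A \<union> B \<subseteq> trancl (A \<union> B)"
      by (meson Un_subset_iff r_into_trancl' subsetI sup_ge1 trancl_mono)
    hence "trancl (trancl A \<union> B) \<subseteq> trancl (trancl (A \<union> B))" by (rule trancl_mono2)
    thus ?thesis by simp
  qed
  show "trancl (A \<union> B) \<subseteq> trancl (trancl A \<union> B)"
    by (rule trancl_mono2) auto
qed

lemma hist_rel_eq: "hist_rel h = trancl (set h)"
proof (induction h rule: rev_induct)
  case Nil
  then show ?case by (simp add: hist_rel_def)
next
  case (snoc p h)
  have "hist_rel (h @ [p]) = trancl (hist_rel h \<union> {p})" by (simp add: hist_rel_def)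
  also have "\<dots> = trancl (set h \<union> {p})" using snoc trancl_trancl_Un[of "set h" "{p}"] by simp
  finally show ?case by simp
qed

lemma hist_rel_snoc: "hist_rel (h @ [p]) = trancl (hist_rel h \<union> {p})"
  by (simp add: hist_rel_def)

lemma reached_props:
  assumes "reached X W \<sigma> h" "strategy X \<sigma>" "tournament X W"
  shows "set h \<subseteq> X \<times> X \<and> set h \<subseteq> W"
  using assms(1)
proof induction
  case start
  then show ?case by simp
next
  case (step h)
  obtain a b where ab: "\<sigma> h = (a, b)" by fastforce
  from step assms(2) ab have "a \<in> X" "b \<in> X" "a \<noteq> b"
    unfolding strategy_def by (auto simp: Let_def)
  with assms(3) have "winner_pair W (a,b) \<in> W \<inter> X \<times> X"
    unfolding tournament_def winner_pair_def total_on_def by auto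
  with step ab show ?case by auto
qed

lemma adj_chain:
  assumes fin: "finite X" and rk: "ranking X R"
  shows "card {z. (x,z) \<in> R \<and> (z,y) \<in> R} = n \<Longrightarrow> (x,y) \<in> R \<Longrightarrow>
     (x,y) \<in> trancl {(a,b). adjacent R a b}"
proof (induction n arbitrary: x y rule: less_induct)
  case (less n)
  have RX: "R \<subseteq> X \<times> X" and tr: "trans R" and ir: "irrefl R"
    using rk unfolding ranking_def proto_ranking_def by auto
  let ?I = "\<lambda>x y. {z. (x,z) \<in> R \<and> (z,y) \<in> R}"
  have finI: "finite (?I x y)" for x y
  proof (rule finite_subset[OF _ fin])
    show "?I x y \<subseteq> X" using RX by blast
  qed
  show ?case
  proof (cases "adjacent R x y")
    case True
    then show ?thesis by auto
  next
    case False
    then obtain z where z: "(x,z) \<in> R" "(z,y) \<in> R" using less.prems unfolding adjacent_def by auto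
    have "?I x z \<subset> ?I x y"
    proof
      show "?I x z \<subseteq> ?I x y" using z tr unfolding trans_def by blast
      have "z \<notin> ?I x z" using ir unfolding irrefl_def by auto
      moreover have "z \<in> ?I x y" using z by auto
      ultimately show "?I x z \<noteq> ?I x y" by blast
    qed
    hence c1: "card (?I x z) < n" using less.prems(1) psubset_card_mono[OF finI] by blast
    have "?I z y \<subset> ?I x y"
    proof
      show "?I z y \<subseteq> ?I x y" using z tr unfolding trans_def by blast
      have "z \<notin> ?I z y" using ir unfolding irrefl_def by auto
      moreover have "z \<in> ?I x y" using z by auto
      ultimately show "?I z y \<noteq> ?I x y" by blast
    qed
    hence c2: "card (?I z y) < n" using less.prems(1) psubset_card_mono[OF finI] by blast
    from less.IH[OF c1 refl z(1)] less.IH[OF c2 refl z(2)] show ?thesis by (rule trancl_trans)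
  qed
qed

theorem mainTheorem12:
  fixes X :: "'a set" and W R :: "('a \<times> 'a) set"
  assumes "finite X" and "tournament X W" and "ranking X R"
  shows "feasible X W R \<longleftrightarrow> (\<forall>x y. adjacent R x y \<longrightarrow> (x, y) \<in> W)"
proof
  assume "feasible X W R"
  then obtain \<sigma> h where st: "strategy X \<sigma>" and re: "reached X W \<sigma> h" and Rh: "R = hist_rel h"
    unfolding feasible_def outcome_of_def by blast
  have hW: "set h \<subseteq> W" using reached_props[OF re st assms(2)] by blast
  show "\<forall>x y. adjacent R x y \<longrightarrow> (x, y) \<in> W"
  proof (intro allI impI)
    fix x y assume adj: "adjacent R x y"
    hence "(x,y) \<in> trancl (set h)" and nz: "\<not> (\<exists>z. (x, z) \<in> trancl (set h) \<and> (z, y) \<in> trancl (set h))"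
      unfolding adjacent_def Rh hist_rel_eq by auto
    then obtain z where z1: "(x,z) \<in> rtrancl (set h)" and z2: "(z,y) \<in> set h"
      using tranclD2 by metis
    from z1 have "z = x \<or> (x,z) \<in> trancl (set h)" using rtranclD by metis
    moreover have "(z,y) \<in> trancl (set h)" using z2 by blast
    ultimately have "(x,y) \<in> set h" using nz z2 by blast
    with hW show "(x,y) \<in> W" by auto
  qed
next
  assume adjW: "\<forall>x y. adjacent R x y \<longrightarrow> (x, y) \<in> W"
  have RX: "R \<subseteq> X \<times> X" and tr: "trans R" and ir: "irrefl R" and tot: "total_on X R"
    using assms(3) unfolding ranking_def proto_ranking_def by auto
  have finR: "finite R" using RX assms(1) finite_subset by blast
  define \<sigma> where "\<sigma> h = (if \<exists>x y. adjacent R x y \<and> unranked (hist_rel h) x y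
      then SOME (x,y). adjacent R x y \<and> unranked (hist_rel h) x y
      else SOME (x,y). x \<in> X \<and> y \<in> X \<and> x \<noteq> y \<and> unranked (hist_rel h) x y)" for h
  have adjX: "adjacent R x y \<Longrightarrow> x \<in> X \<and> y \<in> X \<and> x \<noteq> y" for x y
    using RX ir unfolding adjacent_def irrefl_def by auto
  have s1: "adjacent R (fst (\<sigma> h)) (snd (\<sigma> h)) \<and> unranked (hist_rel h) (fst (\<sigma> h)) (snd (\<sigma> h))"
    if "\<exists>x y. adjacent R x y \<and> unranked (hist_rel h) x y" for h
  proof -
    have eq: "\<sigma> h = (SOME (x,y). adjacent R x y \<and> unranked (hist_rel h) x y)"
      unfolding \<sigma>_def by (rule if_P[OF that])
    have "(\<lambda>(x,y). adjacent R x y \<and> unranked (hist_rel h) x y)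
        (SOME p. (\<lambda>(x,y). adjacent R x y \<and> unranked (hist_rel h) x y) p)"
      by (rule someI_ex) (use that in blast)
    hence "(\<lambda>(x,y). adjacent R x y \<and> unranked (hist_rel h) x y) (\<sigma> h)"
      unfolding eq .
    thus ?thesis by (auto split: prod.splits)
  qed
  have st: "strategy X \<sigma>"
    unfolding strategy_def
  proof (intro allI impI)
    fix h assume "set h \<subseteq> X \<times> X \<and> \<not> total_on X (hist_rel h)"
    hence nt: "\<exists>x y. x \<in> X \<and> y \<in> X \<and> x \<noteq> y \<and> unranked (hist_rel h) x y"
      unfolding total_on_def unranked_def by auto
    show "let (x, y) = \<sigma> h in x \<in> X \<and> y \<in> X \<and> x \<noteq> y \<and> unranked (hist_rel h) x y"
    proof (cases "\<exists>x y. adjacent R x y \<and> unranked (hist_rel h) x y")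
      case True
      from s1[OF True] adjX[of "fst (\<sigma> h)" "snd (\<sigma> h)"] show ?thesis
        by (simp add: Let_def case_prod_beta)
    next
      case False
      have eq: "\<sigma> h = (SOME (x,y). x \<in> X \<and> y \<in> X \<and> x \<noteq> y \<and> unranked (hist_rel h) x y)"
        unfolding \<sigma>_def by (rule if_not_P[OF False])
      have "(\<lambda>(x,y). x \<in> X \<and> y \<in> X \<and> x \<noteq> y \<and> unranked (hist_rel h) x y)
          (SOME p. (\<lambda>(x,y). x \<in> X \<and> y \<in> X \<and> x \<noteq> y \<and> unranked (hist_rel h) x y) p)"
        by (rule someI_ex) (use nt in blast)
      hence "(\<lambda>(x,y). x \<in> X \<and> y \<in> X \<and> x \<noteq> y \<and> unranked (hist_rel h) x y) (\<sigma> h)"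
        unfolding eq .
      thus ?thesis by (simp add: Let_def split: prod.splits)
    qed
  qed
  have ex_adj: "\<exists>x y. adjacent R x y \<and> unranked (hist_rel h) x y"
    if sub: "hist_rel h \<subseteq> R" and nt: "\<not> total_on X (hist_rel h)" for h
  proof (rule ccontr)
    assume nex: "\<not> (\<exists>x y. adjacent R x y \<and> unranked (hist_rel h) x y)"
    have "(a,b) \<in> hist_rel h" if ab: "adjacent R a b" for a b
    proof -
      have abR: "(a,b) \<in> R" using ab unfolding adjacent_def by simp
      have "(b,a) \<notin> R" using abR tr ir unfolding irrefl_def by (meson transD)
      hence "(b,a) \<notin> hist_rel h" using sub by blast
      thus ?thesis using ab nex unfolding unranked_def by blast
    qed
    hence "{(a,b). adjacent R a b} \<subseteq> hist_rel h" by blast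
    hence "trancl {(a,b). adjacent R a b} \<subseteq> trancl (hist_rel h)" by (rule trancl_mono2)
    also have "trancl (hist_rel h) = hist_rel h" by (simp add: hist_rel_eq)
    finally have "trancl {(a,b). adjacent R a b} \<subseteq> hist_rel h" .
    hence "R \<subseteq> hist_rel h" using adj_chain[OF assms(1,3) refl] by auto
    hence "total_on X (hist_rel h)" using tot unfolding total_on_def by blast
    with nt show False by simp
  qed
  have inv: "hist_rel h \<subseteq> R" if "reached X W \<sigma> h" for h
    using that
  proof induction
    case start
    then show ?case by (simp add: hist_rel_def)
  next
    case (step h)
    obtain a b where ab: "\<sigma> h = (a,b)" by fastforce
    from s1[OF ex_adj[OF step.IH step.hyps(2)]] ab have adj: "adjacent R a b" by simp
    hence "(a,b) \<in> W" "(a,b) \<in> R" using adjW unfolding adjacent_def by auto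
    hence wp: "winner_pair W (\<sigma> h) = (a,b)" using ab by (simp add: winner_pair_def)
    have "trancl (hist_rel h \<union> {(a,b)}) \<subseteq> trancl R"
      by (rule trancl_mono2) (use step.IH \<open>(a,b) \<in> R\<close> in auto)
    also have "trancl R = R" using tr by simp
    finally show ?case by (simp add: hist_rel_snoc wp)
  qed
  have grow: "\<exists>h. reached X W \<sigma> h \<and> (total_on X (hist_rel h) \<or> card (hist_rel h) \<ge> n)" for n
  proof (induction n)
    case 0
    then show ?case using reached.start by blast
  next
    case (Suc n)
    then obtain h where re: "reached X W \<sigma> h" and c: "total_on X (hist_rel h) \<or> card (hist_rel h) \<ge> n"
      by blast
    show ?case
    proof (cases "total_on X (hist_rel h)")
      case True
      then show ?thesis using re by blast
    next
      case False
      let ?h = "h @ [winner_pair W (\<sigma> h)]"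
      have re': "reached X W \<sigma> ?h" using reached.step[OF re False] .
      have u: "unranked (hist_rel h) (fst (\<sigma> h)) (snd (\<sigma> h))"
        using s1[OF ex_adj[OF inv[OF re] False]] by simp
      have "winner_pair W (\<sigma> h) \<notin> hist_rel h"
        using u unfolding winner_pair_def unranked_def by (cases "\<sigma> h") auto
      moreover have "hist_rel h \<union> {winner_pair W (\<sigma> h)} \<subseteq> hist_rel ?h"
        unfolding hist_rel_snoc using r_into_trancl' by blast
      moreover have "finite (hist_rel ?h)" using inv[OF re'] finR finite_subset by blast
      ultimately have "card (hist_rel ?h) \<ge> Suc (card (hist_rel h))"
      proof -
        assume a1: "winner_pair W (\<sigma> h) \<notin> hist_rel h"
          and a2: "hist_rel h \<union> {winner_pair W (\<sigma> h)} \<subseteq> hist_rel ?h"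
          and a3: "finite (hist_rel ?h)"
        have f: "finite (hist_rel h)" using a2 a3 finite_subset by blast
        have "card (insert (winner_pair W (\<sigma> h)) (hist_rel h)) = Suc (card (hist_rel h))"
          using a1 f by simp
        moreover have "card (insert (winner_pair W (\<sigma> h)) (hist_rel h)) \<le> card (hist_rel ?h)"
          using a2 a3 by (intro card_mono) auto
        ultimately show ?thesis by simp
      qed
      with c False have "card (hist_rel ?h) \<ge> Suc n" by simp
      with re' show ?thesis by blast
    qed
  qed
  obtain h where re: "reached X W \<sigma> h" and c: "total_on X (hist_rel h) \<or> card (hist_rel h) \<ge> Suc (card R)"
    using grow by blast
  have sub: "hist_rel h \<subseteq> R" using inv[OF re] .
  have "card (hist_rel h) \<le> card R" using card_mono[OF finR sub] .
  with c have T: "total_on X (hist_rel h)" by simp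
  have "R \<subseteq> hist_rel h"
  proof
    fix p assume p: "p \<in> R"
    obtain x y where pxy: "p = (x,y)" by fastforce
    have "x \<in> X" "y \<in> X" "x \<noteq> y" using p pxy RX ir unfolding irrefl_def by auto
    with T have "(x,y) \<in> hist_rel h \<or> (y,x) \<in> hist_rel h" unfolding total_on_def by blast
    moreover have "(y,x) \<notin> R" using p pxy tr ir unfolding irrefl_def by (meson transD)
    ultimately show "p \<in> hist_rel h" using sub pxy by auto
  qed
  with sub have "R = hist_rel h" by blast
  with re T st show "feasible X W R" using assms(3)
    unfolding feasible_def outcome_of_def by blast
qed

end
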